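(* Let $p\in\{1,2\}$. For all $u\in\mathcal C^\infty_c(\mathbb R^2)$, $$\int_{\mathbb R^2}|x|^{2p}|\nabla^2u|^2\lesssim\int_{\mathbb R^2}|x|^{2p}|\Delta u|^2+\int_{\mathbb R^2}|x|^{2p-2}|\nabla u|^2.$$
   Context: $\nabla^2u$ denotes the Hessian of $u$, $|\nabla^2u|^2=\sum_{i,j}(\partial_{ij}u)^2$. *)

theory Defs
  imports "HOL-Analysis.Analysis"
begin

definition pderiv :: "'n::finite \<Rightarrow> (real^'n \<Rightarrow> real) \<Rightarrow> real^'n \<Rightarrow> real" where
  "pderiv i f = (\<lambda>x. frechet_derivative f (at x) (axis i 1))"

fun iter_pderiv :: "'n::finite list \<Rightarrow> (real^'n \<Rightarrow> real) \<Rightarrow> real^'n \<Rightarrow> real" where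
  "iter_pderiv [] f = f"
| "iter_pderiv (i # is) f = pderiv i (iter_pderiv is f)"

text \<open>C^infinity: every iterated partial derivative exists and is (Frechet) differentiable
  everywhere (hence all partial derivatives of all orders exist and are continuous).\<close>
definition smooth :: "(real^'n::finite \<Rightarrow> real) \<Rightarrow> bool" where
  "smooth f \<longleftrightarrow> (\<forall>is x. iter_pderiv is f differentiable (at x))"

definition compact_support :: "(real^'n::finite \<Rightarrow> real) \<Rightarrow> bool" where
  "compact_support f \<longleftrightarrow> compact (closure {x. f x \<noteq> 0})"

definition C_infty_c :: "(real^'n::finite \<Rightarrow> real) \<Rightarrow> bool" where
  "C_infty_c f \<longleftrightarrow> smooth f \<and> compact_support f"

definition grad_sq :: "(real^'n::finite \<Rightarrow> real) \<Rightarrow> real^'n \<Rightarrow> real" where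
  "grad_sq f x = (\<Sum>i\<in>UNIV. (pderiv i f x)^2)"

definition laplacian :: "(real^'n::finite \<Rightarrow> real) \<Rightarrow> real^'n \<Rightarrow> real" where
  "laplacian f x = (\<Sum>i\<in>UNIV. pderiv i (pderiv i f) x)"

definition hessian_sq :: "(real^'n::finite \<Rightarrow> real) \<Rightarrow> real^'n \<Rightarrow> real" where
  "hessian_sq f x = (\<Sum>i\<in>UNIV. \<Sum>j\<in>UNIV. (pderiv i (pderiv j f) x)^2)"

end

theory Submission
  imports Defs
begin

lemma pd_line:
  fixes F :: "real^'n::finite \<Rightarrow> real"
  assumes "F differentiable (at (x + s *\<^sub>R v))"
  shows "((\<lambda>s. F (x + s *\<^sub>R v)) has_real_derivative frechet_derivative F (at (x + s *\<^sub>R v)) v) (at s)"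
proof -
  have d: "(F has_derivative frechet_derivative F (at (x + s *\<^sub>R v))) (at (x + s *\<^sub>R v))"
    using assms frechet_derivative_works by blast
  have l: "((\<lambda>s. x + s *\<^sub>R v) has_derivative (\<lambda>t. t *\<^sub>R v)) (at s)"
    by (auto intro!: derivative_eq_intros)
  have c: "((\<lambda>s. F (x + s *\<^sub>R v)) has_derivative (\<lambda>t. frechet_derivative F (at (x + s *\<^sub>R v)) (t *\<^sub>R v))) (at s)"
    using diff_chain_at[OF l d] by (simp add: o_def)
  have "linear (frechet_derivative F (at (x + s *\<^sub>R v)))" using d has_derivative_linear by blast
  then have "(\<lambda>t. frechet_derivative F (at (x + s *\<^sub>R v)) (t *\<^sub>R v)) = (\<lambda>t. frechet_derivative F (at (x + s *\<^sub>R v)) v * t)"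
    by (simp add: linear_cmul mult.commute)
  with c show ?thesis by (simp add: has_field_derivative_def)
qed

lemma pd_line_axis:
  fixes F :: "real^'n::finite \<Rightarrow> real"
  assumes "\<And>y. F differentiable (at y)"
  shows "((\<lambda>s. F (x + s *\<^sub>R axis i 1)) has_real_derivative pderiv i F (x + s *\<^sub>R axis i 1)) (at s)"
  using pd_line[OF assms] unfolding pderiv_def by blast

lemma mvt_axis:
  fixes F :: "real^'n::finite \<Rightarrow> real"
  assumes "\<And>y. F differentiable (at y)" "0 < t"
  shows "\<exists>s. 0 < s \<and> s < t \<and> F (x + t *\<^sub>R axis i 1) - F x = t * pderiv i F (x + s *\<^sub>R axis i 1)"
proof -
  have "\<exists>z. 0 < z \<and> z < t \<and> (\<lambda>s. F (x + s *\<^sub>R axis i 1)) t - (\<lambda>s. F (x + s *\<^sub>R axis i 1)) 0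
     = (t - 0) * pderiv i F (x + z *\<^sub>R axis i 1)"
    by (rule MVT2) (use assms pd_line_axis[OF assms(1)] in auto)
  then show ?thesis by auto
qed

lemma sym_helper:
  fixes f :: "real^'n::finite \<Rightarrow> real"
  assumes f: "\<And>y. f differentiable (at y)" and fi: "\<And>y. pderiv i f differentiable (at y)" and t: "0 < t"
  shows "\<exists>\<sigma> \<rho>. 0 < \<sigma> \<and> \<sigma> < t \<and> 0 < \<rho> \<and> \<rho> < t \<and>
    f (x + t *\<^sub>R axis i 1 + t *\<^sub>R axis j 1) - f (x + t *\<^sub>R axis i 1) - f (x + t *\<^sub>R axis j 1) + f x
    = t^2 * pderiv j (pderiv i f) (x + \<sigma> *\<^sub>R axis i 1 + \<rho> *\<^sub>R axis j 1)"
proof -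
  define e where "e = (axis i 1 :: real^'n)"
  define d where "d = (axis j 1 :: real^'n)"
  define g where "g = (\<lambda>s. f ((x + t *\<^sub>R d) + s *\<^sub>R e) - f (x + s *\<^sub>R e))"
  have "\<exists>z. 0 < z \<and> z < t \<and> g t - g 0
     = (t - 0) * (pderiv i f ((x + t *\<^sub>R d) + z *\<^sub>R e) - pderiv i f (x + z *\<^sub>R e))"
  proof (rule MVT2)
    show "0 < t" by fact
    fix s :: real
    show "(g has_real_derivative pderiv i f ((x + t *\<^sub>R d) + s *\<^sub>R e) - pderiv i f (x + s *\<^sub>R e)) (at s)"
      unfolding g_def e_def
      by (intro DERIV_diff pd_line_axis f)
  qed
  then obtain \<sigma> where s: "0 < \<sigma>" "\<sigma> < t" and gs: "g t - g 0
     = t * (pderiv i f ((x + t *\<^sub>R d) + \<sigma> *\<^sub>R e) - pderiv i f (x + \<sigma> *\<^sub>R e))" by auto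
  obtain \<rho> where r: "0 < \<rho>" "\<rho> < t" and rr: "pderiv i f ((x + \<sigma> *\<^sub>R e) + t *\<^sub>R d) - pderiv i f (x + \<sigma> *\<^sub>R e)
     = t * pderiv j (pderiv i f) ((x + \<sigma> *\<^sub>R e) + \<rho> *\<^sub>R d)"
    using mvt_axis[OF fi t, of "x + \<sigma> *\<^sub>R e" j] unfolding d_def by blast
  have eq: "(x + t *\<^sub>R d) + \<sigma> *\<^sub>R e = (x + \<sigma> *\<^sub>R e) + t *\<^sub>R d" by (simp add: algebra_simps)
  have "f (x + t *\<^sub>R e + t *\<^sub>R d) - f (x + t *\<^sub>R e) - f (x + t *\<^sub>R d) + f x = g t - g 0"
    unfolding g_def by (simp add: algebra_simps)
  also have "\<dots> = t^2 * pderiv j (pderiv i f) (x + \<sigma> *\<^sub>R e + \<rho> *\<^sub>R d)"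
    using gs rr eq by (simp add: power2_eq_square)
  finally show ?thesis using s r unfolding e_def d_def by blast
qed

lemma cont_eps:
  fixes g :: "real^'n::finite \<Rightarrow> real"
  assumes "continuous_on UNIV g" "0 < e"
  shows "\<exists>d>0. \<forall>y. dist y x < d \<longrightarrow> \<bar>g y - g x\<bar> < e"
proof -
  have "isCont g x" using assms(1) continuous_on_eq_continuous_at[of UNIV g] by auto
  then show ?thesis using assms(2) unfolding continuous_at_eps_delta dist_real_def by blast
qed

lemma pderiv_sym:
  fixes f :: "real^'n::finite \<Rightarrow> real"
  assumes f: "\<And>y. f differentiable (at y)"
    and fi: "\<And>y. pderiv i f differentiable (at y)" and fj: "\<And>y. pderiv j f differentiable (at y)"
    and ci: "continuous_on UNIV (pderiv j (pderiv i f))" and cj: "continuous_on UNIV (pderiv i (pderiv j f))"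
  shows "pderiv j (pderiv i f) x = pderiv i (pderiv j f) x"
proof (rule ccontr)
  define a where "a = pderiv j (pderiv i f) x"
  define b where "b = pderiv i (pderiv j f) x"
  assume "\<not> ?thesis"
  then have ab: "a \<noteq> b" unfolding a_def b_def .
  define \<epsilon> where "\<epsilon> = \<bar>a - b\<bar> / 2"
  have ep: "0 < \<epsilon>" using ab unfolding \<epsilon>_def by auto
  obtain d1 where d1: "d1 > 0" "\<And>y. dist y x < d1 \<Longrightarrow> \<bar>pderiv j (pderiv i f) y - a\<bar> < \<epsilon>"
    using cont_eps[OF ci ep, of x] unfolding a_def by blast
  obtain d2 where d2: "d2 > 0" "\<And>y. dist y x < d2 \<Longrightarrow> \<bar>pderiv i (pderiv j f) y - b\<bar> < \<epsilon>"
    using cont_eps[OF cj ep, of x] unfolding b_def by blast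
  define t where "t = min d1 d2 / 4"
  have t: "0 < t" "2 * t < d1" "2 * t < d2" using d1 d2 unfolding t_def by auto
  obtain \<sigma> \<rho> where sr: "0 < \<sigma>" "\<sigma> < t" "0 < \<rho>" "\<rho> < t" and
    E1: "f (x + t *\<^sub>R axis i 1 + t *\<^sub>R axis j 1) - f (x + t *\<^sub>R axis i 1) - f (x + t *\<^sub>R axis j 1) + f x
    = t^2 * pderiv j (pderiv i f) (x + \<sigma> *\<^sub>R axis i 1 + \<rho> *\<^sub>R axis j 1)"
    using sym_helper[OF f fi t(1), of x j] by blast
  obtain \<sigma>' \<rho>' where sr': "0 < \<sigma>'" "\<sigma>' < t" "0 < \<rho>'" "\<rho>' < t" and
    E2: "f (x + t *\<^sub>R axis j 1 + t *\<^sub>R axis i 1) - f (x + t *\<^sub>R axis j 1) - f (x + t *\<^sub>R axis i 1) + f x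
    = t^2 * pderiv i (pderiv j f) (x + \<sigma>' *\<^sub>R axis j 1 + \<rho>' *\<^sub>R axis i 1)"
    using sym_helper[OF f fj t(1), of x i] by blast
  have "x + t *\<^sub>R axis j 1 + t *\<^sub>R axis i 1 = x + t *\<^sub>R axis i 1 + t *\<^sub>R axis j 1"
    by (simp add: algebra_simps)
  note xeq = this
  have "t^2 * pderiv j (pderiv i f) (x + \<sigma> *\<^sub>R axis i 1 + \<rho> *\<^sub>R axis j 1)
     = t^2 * pderiv i (pderiv j f) (x + \<sigma>' *\<^sub>R axis j 1 + \<rho>' *\<^sub>R axis i 1)"
    using E1 E2[unfolded xeq] by linarith
  then have eq: "pderiv j (pderiv i f) (x + \<sigma> *\<^sub>R axis i 1 + \<rho> *\<^sub>R axis j 1)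
     = pderiv i (pderiv j f) (x + \<sigma>' *\<^sub>R axis j 1 + \<rho>' *\<^sub>R axis i 1)"
    using t(1) by simp
  have n1: "dist (x + \<sigma> *\<^sub>R axis i 1 + \<rho> *\<^sub>R axis j 1) x < d1"
  proof -
    have "dist (x + \<sigma> *\<^sub>R axis i 1 + \<rho> *\<^sub>R axis j 1) x = norm (\<sigma> *\<^sub>R axis i 1 + \<rho> *\<^sub>R (axis j 1::real^'n))"
      by (simp add: dist_norm)
    also have "\<dots> \<le> norm (\<sigma> *\<^sub>R (axis i 1::real^'n)) + norm (\<rho> *\<^sub>R (axis j 1::real^'n))" by (rule norm_triangle_ineq)
    also have "\<dots> = \<sigma> + \<rho>" using sr by simp
    finally show ?thesis using sr t by linarith
  qed
  have n2: "dist (x + \<sigma>' *\<^sub>R axis j 1 + \<rho>' *\<^sub>R axis i 1) x < d2"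
  proof -
    have "dist (x + \<sigma>' *\<^sub>R axis j 1 + \<rho>' *\<^sub>R axis i 1) x = norm (\<sigma>' *\<^sub>R axis j 1 + \<rho>' *\<^sub>R (axis i 1::real^'n))"
      by (simp add: dist_norm)
    also have "\<dots> \<le> norm (\<sigma>' *\<^sub>R (axis j 1::real^'n)) + norm (\<rho>' *\<^sub>R (axis i 1::real^'n))" by (rule norm_triangle_ineq)
    also have "\<dots> = \<sigma>' + \<rho>'" using sr' by simp
    finally show ?thesis using sr' t by linarith
  qed
  have "\<bar>a - b\<bar> < 2 * \<epsilon>" using d1(2)[OF n1] d2(2)[OF n2] eq by linarith
  then show False unfolding \<epsilon>_def by simp
qed

lemma integrable_cs:
  fixes g :: "real^'n::finite \<Rightarrow> real"
  assumes c: "continuous_on UNIV g" and z: "\<And>x. R < norm x \<Longrightarrow> g x = 0"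
  shows "integrable lborel g"
proof -
  have "integrable lborel (\<lambda>x. indicator (cball 0 R) x *\<^sub>R g x)"
    by (rule borel_integrable_compact) (auto intro: continuous_on_subset[OF c])
  moreover have "(\<lambda>x. indicator (cball 0 R) x *\<^sub>R g x) = g"
  proof
    fix x show "indicator (cball 0 R) x *\<^sub>R g x = g x"
      using z[of x] by (cases "norm x \<le> R") (auto simp: indicator_def)
  qed
  ultimately show ?thesis by simp
qed

lemma pderiv_zero_out:
  fixes F :: "real^'n::finite \<Rightarrow> real"
  assumes z: "\<And>x. R < norm x \<Longrightarrow> F x = 0" and y: "R < norm y"
  shows "pderiv i F y = 0"
proof -
  have "((\<lambda>x. 0::real) has_derivative (\<lambda>h. 0)) (at y)" by simp
  then have "(F has_derivative (\<lambda>h. 0)) (at y)"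
    by (rule has_derivative_transform_within_open[where s="{x. R < norm x}"])
       (use y z in \<open>auto intro: open_Collect_less continuous_intros\<close>)
  then have "(\<lambda>h. 0) = frechet_derivative F (at y)" by (rule frechet_derivative_at)
  then show ?thesis unfolding pderiv_def by (metis)
qed

lemma integral_translate:
  fixes F :: "real^'n::finite \<Rightarrow> real"
  assumes c: "continuous_on UNIV F"
  shows "(\<integral>x. F (x + a) \<partial>lborel) = (\<integral>x. F x \<partial>lborel)"
proof -
  have m: "F \<in> borel_measurable borel" using c by (rule borel_measurable_continuous_onI)
  have "(\<integral>x. F x \<partial>lborel) = (\<integral>x. F x \<partial>(distr lborel borel ((+) a)))"
    by (simp add: lborel_distr_plus)
  also have "\<dots> = (\<integral>x. F (a + x) \<partial>lborel)"
    by (rule integral_distr) (use m in auto)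
  finally show ?thesis by (simp add: add.commute)
qed

lemma ibp_zero:
  fixes F :: "real^'n::finite \<Rightarrow> real"
  assumes F: "\<And>y. F differentiable (at y)" and c: "continuous_on UNIV (pderiv i F)"
    and z: "\<And>x. R < norm x \<Longrightarrow> F x = 0" and R: "0 \<le> R"
  shows "(\<integral>x. pderiv i F x \<partial>lborel) = 0"
proof -
  define e where "e = (axis i 1 :: real^'n)"
  define I where "I = (\<integral>x. pderiv i F x \<partial>lborel)"
  define M where "M = measure lborel (cball (0::real^'n) (R+1))"
  have M0: "0 \<le> M" unfolding M_def by simp
  have Fc: "continuous_on UNIV F"
    by (simp add: continuous_at_imp_continuous_on differentiable_imp_continuous_within F)
  have dz: "pderiv i F x = 0" if "R < norm x" for x using pderiv_zero_out[OF z that] .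
  have uc: "uniformly_continuous_on (cball 0 (R+2)) (pderiv i F)"
    by (rule compact_uniformly_continuous) (auto intro: continuous_on_subset[OF c])
  have bound: "\<bar>I\<bar> \<le> \<epsilon> * M" if ep: "0 < \<epsilon>" for \<epsilon>
  proof -
    obtain \<delta> where d: "\<delta> > 0" and dd: "\<And>x x'. x \<in> cball 0 (R+2) \<Longrightarrow> x' \<in> cball 0 (R+2) \<Longrightarrow>
        dist x' x < \<delta> \<Longrightarrow> dist (pderiv i F x') (pderiv i F x) < \<epsilon>"
      using uc ep unfolding uniformly_continuous_on_def by metis
    define h where "h = min (\<delta>/2) 1"
    have h: "0 < h" "h < \<delta>" "h \<le> 1" using d unfolding h_def by auto
    define q where "q = (\<lambda>x. (F (x + h *\<^sub>R e) - F x) / h)"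
    have Fsc: "continuous_on UNIV (\<lambda>x. F (x + h *\<^sub>R e))"
      by (rule continuous_on_compose2[OF Fc]) (auto intro: continuous_intros)
    have zs: "F (x + h *\<^sub>R e) = 0" if "R + 1 < norm x" for x
    proof -
      have "norm x \<le> norm (x + h *\<^sub>R e) + norm (h *\<^sub>R e)" by (metis add_diff_cancel norm_triangle_ineq4)
      then have "norm x \<le> norm (x + h *\<^sub>R e) + h" using h unfolding e_def by simp
      then show ?thesis using z that h by auto
    qed
    have i1: "integrable lborel (\<lambda>x. F (x + h *\<^sub>R e))" by (rule integrable_cs[OF Fsc zs])
    have i2: "integrable lborel F" by (rule integrable_cs[OF Fc z])
    have qint: "(\<integral>x. q x \<partial>lborel) = 0"
    proof -
      have "(\<integral>x. q x \<partial>lborel) = (\<integral>x. F (x + h *\<^sub>R e) - F x \<partial>lborel) / h"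
        unfolding q_def by simp
      also have "\<dots> = ((\<integral>x. F (x + h *\<^sub>R e) \<partial>lborel) - (\<integral>x. F x \<partial>lborel)) / h"
        using i1 i2 by simp
      also have "\<dots> = 0" using integral_translate[OF Fc, of "h *\<^sub>R e"] by simp
      finally show ?thesis .
    qed
    have qc: "continuous_on UNIV q" unfolding q_def
      by (intro continuous_intros Fsc Fc) (use h in auto)
    have iD: "integrable lborel (pderiv i F)" by (rule integrable_cs[OF c dz])
    have iq: "integrable lborel q" unfolding q_def using i1 i2 by simp
    have pw: "\<bar>pderiv i F x - q x\<bar> \<le> \<epsilon> * indicator (cball 0 (R+1)) x" for x
    proof (cases "norm x \<le> R + 1")
      case False
      then show ?thesis using dz[of x] zs[of x] z[of x] R unfolding q_def by (auto simp: indicator_def)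
    next
      case True
      obtain s where s: "0 < s" "s < h" and sm: "F (x + h *\<^sub>R e) - F x = h * pderiv i F (x + s *\<^sub>R e)"
        using mvt_axis[OF F h(1), of x i] unfolding e_def by blast
      have qx: "q x = pderiv i F (x + s *\<^sub>R e)" unfolding q_def using sm h by simp
      have ds: "dist (x + s *\<^sub>R e) x < \<delta>" using s h unfolding e_def by (simp add: dist_norm)
      have x1: "x \<in> cball 0 (R+2)" using True by simp
      have "norm (x + s *\<^sub>R e) \<le> norm x + norm (s *\<^sub>R e)" by (rule norm_triangle_ineq)
      then have "norm (x + s *\<^sub>R e) \<le> R + 2" using True s h unfolding e_def by simp
      then have x2: "x + s *\<^sub>R e \<in> cball 0 (R+2)" by simp
      have "\<bar>pderiv i F x - q x\<bar> < \<epsilon>" using dd[OF x1 x2 ds] qx by (simp add: dist_real_def abs_minus_commute)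
      then show ?thesis using True by (simp add: indicator_def)
    qed
    have "\<bar>I\<bar> = \<bar>\<integral>x. pderiv i F x - q x \<partial>lborel\<bar>"
      unfolding I_def using iD iq qint by simp
    also have "\<dots> \<le> (\<integral>x. \<bar>pderiv i F x - q x\<bar> \<partial>lborel)" by (rule integral_abs_bound)
    also have "\<dots> \<le> (\<integral>x. \<epsilon> * indicator (cball (0::real^'n) (R+1)) x \<partial>lborel)"
    proof (rule Bochner_Integration.integral_mono)
      show "integrable lborel (\<lambda>x. \<bar>pderiv i F x - q x\<bar>)" using iD iq by simp
      show "integrable lborel (\<lambda>x. \<epsilon> * indicator (cball (0::real^'n) (R+1)) x :: real)"
        using borel_integrable_compact[of "cball (0::real^'n) (R+1)" "\<lambda>x. \<epsilon>"] by (simp add: mult.commute)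
    qed (use pw in auto)
    also have "\<dots> = \<epsilon> * M" unfolding M_def by simp
    finally show ?thesis .
  qed
  show ?thesis
  proof (rule ccontr)
    assume "\<not> ?thesis"
    then have I0: "0 < \<bar>I\<bar>" unfolding I_def by simp
    have "\<bar>I\<bar> \<le> (\<bar>I\<bar> / (M+1)) * M" using bound[of "\<bar>I\<bar> / (M+1)"] I0 M0 by simp
    also have "\<dots> < \<bar>I\<bar>" using I0 M0 by (simp add: field_simps)
    finally show False by simp
  qed
qed

lemma iter_zero:
  fixes u :: "real^'n::finite \<Rightarrow> real"
  assumes z: "\<And>x. R < norm x \<Longrightarrow> u x = 0"
  shows "R < norm x \<Longrightarrow> iter_pderiv is u x = 0"
proof (induction "is" arbitrary: x)
  case Nil then show ?case using z by simp
next
  case (Cons i js)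
  then show ?case using pderiv_zero_out[of R "iter_pderiv js u" x i] by simp
qed

lemma cs_radius:
  fixes u :: "real^'n::finite \<Rightarrow> real"
  assumes "compact_support u"
  obtains R where "0 \<le> R" "\<And>x. R < norm x \<Longrightarrow> u x = 0"
proof -
  have "bounded (closure {x. u x \<noteq> 0})" using assms compact_imp_bounded unfolding compact_support_def by blast
  then obtain a where a: "\<And>x. x \<in> closure {x. u x \<noteq> 0} \<Longrightarrow> norm x \<le> a" unfolding bounded_iff by blast
  show ?thesis
  proof (rule that[of "max a 0"])
    fix x :: "real^'n" assume "max a 0 < norm x"
    then show "u x = 0" using a[of x] closure_subset[of "{x. u x \<noteq> 0}"] by force
  qed simp
qed

lemma pderiv_mult:
  fixes f g :: "real^'n::finite \<Rightarrow> real"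
  assumes f: "f differentiable (at x)" and g: "g differentiable (at x)"
  shows "pderiv i (\<lambda>y. f y * g y) x = f x * pderiv i g x + pderiv i f x * g x"
proof -
  have "((\<lambda>y. f y * g y) has_derivative (\<lambda>h. f x * frechet_derivative g (at x) h + frechet_derivative f (at x) h * g x)) (at x)"
    by (rule has_derivative_mult) (use f g frechet_derivative_works in auto)
  then have "(\<lambda>h. f x * frechet_derivative g (at x) h + frechet_derivative f (at x) h * g x) = frechet_derivative (\<lambda>y. f y * g y) (at x)"
    by (rule frechet_derivative_at)
  then show ?thesis unfolding pderiv_def by (metis)
qed

lemma weight_deriv:
  fixes x :: "real^'n::finite"
  assumes p: "1 \<le> p"
  shows "(\<lambda>x::real^'n. norm x ^ (2*p)) differentiable (at x)"
    and "pderiv i (\<lambda>x::real^'n. norm x ^ (2*p)) x = 2 * real p * norm x ^ (2*p-2) * x $ i"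
proof -
  have eq: "(\<lambda>x::real^'n. norm x ^ (2*p)) = (\<lambda>x. (x \<bullet> x)^p)"
    by (simp add: power_mult power2_norm_eq_inner)
  have d: "((\<lambda>x::real^'n. (x \<bullet> x)^p) has_derivative (\<lambda>h. real p * (x \<bullet> x)^(p-1) * (2 * (x \<bullet> h)))) (at x)"
    by (auto intro!: derivative_eq_intros simp: inner_commute algebra_simps)
  then show "(\<lambda>x::real^'n. norm x ^ (2*p)) differentiable (at x)" unfolding eq differentiable_def by blast
  have "(\<lambda>h. real p * (x \<bullet> x)^(p-1) * (2 * (x \<bullet> h))) = frechet_derivative (\<lambda>x::real^'n. (x \<bullet> x)^p) (at x)"
    using d by (rule frechet_derivative_at)
  then have "pderiv i (\<lambda>x::real^'n. norm x ^ (2*p)) x = real p * (x \<bullet> x)^(p-1) * (2 * (x \<bullet> axis i 1))"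
    unfolding eq pderiv_def by metis
  also have "(x \<bullet> x)^(p-1) = norm x ^ (2*p-2)"
  proof -
    have "2*p-2 = 2*(p-1)" by simp
    then show ?thesis by (simp add: power_mult power2_norm_eq_inner[symmetric])
  qed
  finally show "pderiv i (\<lambda>x::real^'n. norm x ^ (2*p)) x = 2 * real p * norm x ^ (2*p-2) * x $ i"
    by (simp add: inner_axis)
qed

lemma key_ineq:
  fixes xa xb aa ab ad ua ub P N :: real
  assumes "0 \<le> N"
  shows "(N*(xa^2+xb^2))*(aa^2+2*ab^2+ad^2) \<le> 2*((N*(xa^2+xb^2))*(aa+ad)^2 + 8*P^2*N*(ua^2+ub^2) + 2*((N*(xa^2+xb^2))*(ab^2 - aa*ad) + 2*P*N*ub*(xa*ab - xb*aa)))"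
proof -
  have "2*((N*(xa^2+xb^2))*(aa+ad)^2 + 8*P^2*N*(ua^2+ub^2) + 2*((N*(xa^2+xb^2))*(ab^2 - aa*ad) + 2*P*N*ub*(xa*ab - xb*aa)))
     - (N*(xa^2+xb^2))*(aa^2+2*ab^2+ad^2)
   = N*((xa*aa+xb*ab)^2 + (xa^2+xb^2)*ab^2 + (xa^2+xb^2)*ad^2 + 16*P^2*ua^2 + (xa*ab - xb*aa + 4*P*ub)^2)"
    by algebra
  moreover have "0 \<le> N*((xa*aa+xb*ab)^2 + (xa^2+xb^2)*ab^2 + (xa^2+xb^2)*ad^2 + 16*P^2*ua^2 + (xa*ab - xb*aa + 4*P*ub)^2)"
    using assms by (intro mult_nonneg_nonneg add_nonneg_nonneg) auto
  ultimately show ?thesis by linarith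
qed

theorem lemmaA1:
  fixes p :: nat
  assumes "p \<in> {1, 2}"
  shows "\<exists>C::real. \<forall>u :: real^2 \<Rightarrow> real. C_infty_c u \<longrightarrow>
     (\<integral>x. norm x ^ (2*p) * hessian_sq u x \<partial>lborel)
       \<le> C * ((\<integral>x. norm x ^ (2*p) * (laplacian u x)^2 \<partial>lborel)
             + (\<integral>x. norm x ^ (2*p - 2) * grad_sq u x \<partial>lborel))"
proof -
  have p1: "1 \<le> p" "p \<le> 2" using assms by auto
  show ?thesis
  proof (rule exI[of _ 64], intro allI impI)
    fix u :: "real^2 \<Rightarrow> real"
    assume "C_infty_c u"
    then have sm: "smooth u" and cs: "compact_support u" by (auto simp: C_infty_c_def)
    obtain R where R0: "0 \<le> R" and Rz: "\<And>x. R < norm x \<Longrightarrow> u x = 0" using cs_radius[OF cs] by blast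
    have D: "\<And>is x. iter_pderiv is u differentiable (at x)" using sm unfolding smooth_def by blast
    have C: "\<And>is. continuous_on UNIV (iter_pderiv is u)"
      using D by (simp add: continuous_at_imp_continuous_on differentiable_imp_continuous_within)
    have Z: "\<And>is x. R < norm x \<Longrightarrow> iter_pderiv is u x = 0" using iter_zero[of R u, OF Rz] by blast
    have d0: "\<And>x. u differentiable (at x)" using D[of "[]"] by simp
    have d1: "\<And>i x. pderiv i u differentiable (at x)" using D[of "[_]"] by simp
    have d2: "\<And>i j x. pderiv i (pderiv j u) differentiable (at x)" using D[of "[_,_]"] by simp
    have c1: "\<And>i. continuous_on UNIV (pderiv i u)" using C[of "[_]"] by simp
    have c2: "\<And>i j. continuous_on UNIV (pderiv i (pderiv j u))" using C[of "[_,_]"] by simp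
    have c3: "\<And>i j k. continuous_on UNIV (pderiv i (pderiv j (pderiv k u)))" using C[of "[_,_,_]"] by simp
    have z1: "\<And>i x. R < norm x \<Longrightarrow> pderiv i u x = 0" using Z[of _ "[_]"] by simp
    have z2: "\<And>i j x. R < norm x \<Longrightarrow> pderiv i (pderiv j u) x = 0" using Z[of _ "[_,_]"] by simp
    have sym2: "\<And>x. pderiv 2 (pderiv 1 u) x = pderiv 1 (pderiv 2 u) x"
      by (rule pderiv_sym[OF d0 d1 d1 c2 c2])
    have e12: "pderiv 1 (pderiv 2 u) = pderiv 2 (pderiv 1 u)" by (rule ext) (simp add: sym2)
    have sym3: "\<And>x. pderiv 1 (pderiv 1 (pderiv 2 u)) x = pderiv 2 (pderiv 1 (pderiv 1 u)) x"
    proof -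
      fix x
      have "pderiv 2 (pderiv 1 (pderiv 1 u)) x = pderiv 1 (pderiv 2 (pderiv 1 u)) x"
        by (rule pderiv_sym[OF d1 d2 d2 c3 c3])
      then show "pderiv 1 (pderiv 1 (pderiv 2 u)) x = pderiv 2 (pderiv 1 (pderiv 1 u)) x"
        by (simp add: e12)
    qed
    define w where "w = (\<lambda>x::real^2. norm x ^ (2*p))"
    have dw: "\<And>x. w differentiable (at x)" unfolding w_def using weight_deriv(1)[OF p1(1)] by blast
    have pw: "\<And>i x. pderiv i w x = 2 * real p * norm x ^ (2*p-2) * x $ i"
      unfolding w_def using weight_deriv(2)[OF p1(1)] by blast
    have cw: "continuous_on UNIV w" unfolding w_def by (intro continuous_intros)
    define F1 where "F1 = (\<lambda>x. w x * (pderiv 2 u x * pderiv 1 (pderiv 2 u) x))"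
    define F2 where "F2 = (\<lambda>x. w x * (pderiv 2 u x * pderiv 1 (pderiv 1 u) x))"
    have dF1: "\<And>y. F1 differentiable (at y)" unfolding F1_def by (intro differentiable_mult dw d1 d2)
    have dF2: "\<And>y. F2 differentiable (at y)" unfolding F2_def by (intro differentiable_mult dw d1 d2)
    have pF1: "pderiv 1 F1 x = w x * (pderiv 2 u x * pderiv 1 (pderiv 1 (pderiv 2 u)) x
        + pderiv 1 (pderiv 2 u) x * pderiv 1 (pderiv 2 u) x)
        + (2 * real p * norm x ^ (2*p-2) * x $ 1) * (pderiv 2 u x * pderiv 1 (pderiv 2 u) x)" for x
      unfolding F1_def
      by (simp add: pderiv_mult[of w x "\<lambda>y. pderiv 2 u y * pderiv 1 (pderiv 2 u) y"]
          pderiv_mult[of "pderiv 2 u" x "pderiv 1 (pderiv 2 u)"] dw d1 d2 pw)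
    have pF2: "pderiv 2 F2 x = w x * (pderiv 2 u x * pderiv 2 (pderiv 1 (pderiv 1 u)) x
        + pderiv 2 (pderiv 2 u) x * pderiv 1 (pderiv 1 u) x)
        + (2 * real p * norm x ^ (2*p-2) * x $ 2) * (pderiv 2 u x * pderiv 1 (pderiv 1 u) x)" for x
      unfolding F2_def
      by (simp add: pderiv_mult[of w x "\<lambda>y. pderiv 2 u y * pderiv 1 (pderiv 1 u) y"]
          pderiv_mult[of "pderiv 2 u" x "pderiv 1 (pderiv 1 u)"] dw d1 d2 pw)
    have cF1: "continuous_on UNIV (pderiv 1 F1)"
    proof -
      have "pderiv 1 F1 = (\<lambda>x. w x * (pderiv 2 u x * pderiv 1 (pderiv 1 (pderiv 2 u)) x
        + pderiv 1 (pderiv 2 u) x * pderiv 1 (pderiv 2 u) x)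
        + (2 * real p * norm x ^ (2*p-2) * x $ 1) * (pderiv 2 u x * pderiv 1 (pderiv 2 u) x))"
        using pF1 by (intro ext) simp
      then show ?thesis by (simp only:) (intro continuous_intros cw c1 c2 c3)
    qed
    have cF2: "continuous_on UNIV (pderiv 2 F2)"
    proof -
      have "pderiv 2 F2 = (\<lambda>x. w x * (pderiv 2 u x * pderiv 2 (pderiv 1 (pderiv 1 u)) x
        + pderiv 2 (pderiv 2 u) x * pderiv 1 (pderiv 1 u) x)
        + (2 * real p * norm x ^ (2*p-2) * x $ 2) * (pderiv 2 u x * pderiv 1 (pderiv 1 u) x))"
        using pF2 by (intro ext) simp
      then show ?thesis by (simp only:) (intro continuous_intros cw c1 c2 c3)
    qed
    have zF1: "\<And>x. R < norm x \<Longrightarrow> F1 x = 0" unfolding F1_def using z1 by simp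
    have zF2: "\<And>x. R < norm x \<Longrightarrow> F2 x = 0" unfolding F2_def using z1 by simp
    have I1: "(\<integral>x. pderiv 1 F1 x \<partial>lborel) = 0" by (rule ibp_zero[OF dF1 cF1 zF1 R0])
    have I2: "(\<integral>x. pderiv 2 F2 x \<partial>lborel) = 0" by (rule ibp_zero[OF dF2 cF2 zF2 R0])
    have zdF1: "\<And>x. R < norm x \<Longrightarrow> pderiv 1 F1 x = 0" using pderiv_zero_out[of R F1, OF zF1] by blast
    have zdF2: "\<And>x. R < norm x \<Longrightarrow> pderiv 2 F2 x = 0" using pderiv_zero_out[of R F2, OF zF2] by blast
    define fH where "fH = (\<lambda>x::real^2. norm x ^ (2*p) * hessian_sq u x)"
    define fL where "fL = (\<lambda>x::real^2. norm x ^ (2*p) * (laplacian u x)^2)"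
    define fG where "fG = (\<lambda>x::real^2. norm x ^ (2*p-2) * grad_sq u x)"
    have cH: "continuous_on UNIV fH" unfolding fH_def hessian_sq_def sum_2
      by (intro continuous_intros c2)
    have cL: "continuous_on UNIV fL" unfolding fL_def laplacian_def sum_2
      by (intro continuous_intros c2)
    have cG: "continuous_on UNIV fG" unfolding fG_def grad_sq_def sum_2
      by (intro continuous_intros c1)
    have iH: "integrable lborel fH"
      by (rule integrable_cs[OF cH, where R=R]) (simp add: fH_def hessian_sq_def sum_2 z2)
    have iL: "integrable lborel fL"
      by (rule integrable_cs[OF cL, where R=R]) (simp add: fL_def laplacian_def sum_2 z2)
    have iG: "integrable lborel fG"
      by (rule integrable_cs[OF cG, where R=R]) (simp add: fG_def grad_sq_def sum_2 z1)
    have iF1: "integrable lborel (pderiv 1 F1)" by (rule integrable_cs[OF cF1 zdF1])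
    have iF2: "integrable lborel (pderiv 2 F2)" by (rule integrable_cs[OF cF2 zdF2])
    have pt: "fH x \<le> 2 * fL x + 16 * (real p)^2 * fG x + 4 * (pderiv 1 F1 x - pderiv 2 F2 x)" for x
    proof -
      define N where "N = norm x ^ (2*p-2)"
      have N0: "0 \<le> N" unfolding N_def by simp
      have nx: "norm x ^ 2 = x$1^2 + x$2^2"
        unfolding power2_norm_eq_inner by (simp add: inner_vec_def sum_2 power2_eq_square)
      have W: "norm x ^ (2*p) = N * (x$1^2 + x$2^2)"
      proof -
        have "2*p = (2*p-2) + 2" using p1 by simp
        then have "norm x ^ (2*p) = norm x ^ (2*p-2) * norm x ^ 2" by (metis power_add)
        then show ?thesis unfolding N_def nx .
      qed
      have wx: "w x = N * (x$1^2 + x$2^2)" unfolding w_def W ..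
      define s where "s = x$1^2 + x$2^2"
      define aa where "aa = pderiv 1 (pderiv 1 u) x"
      define ab where "ab = pderiv 1 (pderiv 2 u) x"
      define ad where "ad = pderiv 2 (pderiv 2 u) x"
      define ua where "ua = pderiv 1 u x"
      define ub where "ub = pderiv 2 u x"
      define P where "P = real p"
      have k: "(N * s)*(aa^2+2*ab^2+ad^2) \<le> 2*((N * s)*(aa+ad)^2 + 8*P^2*N*(ua^2+ub^2) + 2*((N * s)*(ab^2 - aa*ad) + 2*P*N*ub*(x$1*ab - x$2*aa)))"
        unfolding s_def by (rule key_ineq[OF N0])
      have hH: "fH x = (N * s)*(aa^2+2*ab^2+ad^2)"
        unfolding fH_def hessian_sq_def sum_2 sym2 W s_def aa_def ab_def ad_def by (simp add: algebra_simps)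
      have hL: "fL x = (N * s)*(aa+ad)^2"
        unfolding fL_def laplacian_def sum_2 W s_def aa_def ad_def by simp
      have hG: "fG x = N*(ua^2+ub^2)"
        unfolding fG_def grad_sq_def sum_2 N_def ua_def ub_def by simp
      have hD: "pderiv 1 F1 x - pderiv 2 F2 x = (N * s)*(ab^2 - aa*ad) + 2*P*N*ub*(x$1*ab - x$2*aa)"
        unfolding pF1 pF2 sym3 wx s_def[symmetric] N_def[symmetric] aa_def[symmetric] ab_def[symmetric] ad_def[symmetric]
          ub_def[symmetric] P_def[symmetric]
        by (simp add: algebra_simps power2_eq_square)
      have "2 * fL x + 16 * (real p)^2 * fG x + 4 * (pderiv 1 F1 x - pderiv 2 F2 x)
         = 2*((N * s)*(aa+ad)^2 + 8*P^2*N*(ua^2+ub^2) + 2*((N * s)*(ab^2 - aa*ad) + 2*P*N*ub*(x$1*ab - x$2*aa)))"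
        unfolding hL hG hD P_def by (simp add: algebra_simps)
      then show ?thesis using k hH by linarith
    qed
    have "(\<integral>x. fH x \<partial>lborel) \<le> (\<integral>x. 2 * fL x + 16 * (real p)^2 * fG x + 4 * (pderiv 1 F1 x - pderiv 2 F2 x) \<partial>lborel)"
      by (rule Bochner_Integration.integral_mono) (use iH iL iG iF1 iF2 pt in auto)
    also have "\<dots> = 2 * (\<integral>x. fL x \<partial>lborel) + 16 * (real p)^2 * (\<integral>x. fG x \<partial>lborel)
        + 4 * ((\<integral>x. pderiv 1 F1 x \<partial>lborel) - (\<integral>x. pderiv 2 F2 x \<partial>lborel))"
      using iL iG iF1 iF2 by simp
    also have "\<dots> = 2 * (\<integral>x. fL x \<partial>lborel) + 16 * (real p)^2 * (\<integral>x. fG x \<partial>lborel)"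
      using I1 I2 by simp
    also have "\<dots> \<le> 64 * ((\<integral>x. fL x \<partial>lborel) + (\<integral>x. fG x \<partial>lborel))"
    proof -
      have L0: "0 \<le> (\<integral>x. fL x \<partial>lborel)" unfolding fL_def by (intro Bochner_Integration.integral_nonneg) simp
      have G0: "0 \<le> (\<integral>x. fG x \<partial>lborel)" unfolding fG_def grad_sq_def
        by (intro Bochner_Integration.integral_nonneg mult_nonneg_nonneg sum_nonneg) auto
      have "(real p)^2 \<le> 4" using p1 by (simp add: power2_eq_square mult_le_cancel_right1) (metis of_nat_le_iff of_nat_numeral mult_mono' of_nat_0_le_iff numeral_Bit0_eq_double mult_2 le_numeral_extra(3))
      then have "16 * (real p)^2 * (\<integral>x. fG x \<partial>lborel) \<le> 64 * (\<integral>x. fG x \<partial>lborel)"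
        using G0 by (intro mult_right_mono) auto
      then show ?thesis using L0 unfolding distrib_left by linarith
    qed
    finally show "(\<integral>x. norm x ^ (2*p) * hessian_sq u x \<partial>lborel)
       \<le> 64 * ((\<integral>x. norm x ^ (2*p) * (laplacian u x)^2 \<partial>lborel)
             + (\<integral>x. norm x ^ (2*p - 2) * grad_sq u x \<partial>lborel))"
      unfolding fH_def fL_def fG_def .
  qed
qed

end
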